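(* Let $\mathbf{u}=(u_n)$ be an a-sequence. Then the torsion subgroup $t(s_\mathbf{u}(\mathbb{T}))$ of $s_\mathbf{u}(\mathbb{T})$ is dense in $s_\mathbf{u}(\mathbb{T})$ with respect to the restriction of the topology $\tau_\mathbf{u}$ to $s_\mathbf{u}(\mathbb{T})$.
   Context: An a-sequence is a strictly increasing sequence of integers $\mathbf{u}=(u_n)_{n\in\mathbb{N}}$ with $u_n\mid u_{n+1}$ for all $n$. $\mathbb{T}=\mathbb{R}/\mathbb{Z}$, $\|x\|$ is the distance from $x$ to the nearest integer, $d(x,y)=\|x-y\|$. $s_\mathbf{u}(\mathbb{T})=\{x\in\mathbb{T}: u_nx\to0\text{ in }\mathbb{T}\}$. $\tau_\mathbf{u}$ is the topology on $\mathbb{T}$ induced by the metric $\varrho_\mathbf{u}(x,y)=\sup_n\max\{d(x,y),d(u_nx,u_ny)\}$. *)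

theory Defs
  imports "HOL-Analysis.Analysis"
begin

text \<open>Elements of the circle group T = R/Z are represented by real representatives;
  all notions below are 1-periodic, hence well defined on T.\<close>

definition a_sequence :: "(nat \<Rightarrow> int) \<Rightarrow> bool" where
  "a_sequence u \<longleftrightarrow> strict_mono u \<and> (\<forall>n. u n dvd u (Suc n))"

definition tnorm :: "real \<Rightarrow> real" where
  "tnorm x = \<bar>x - real_of_int (round x)\<bar>"

definition tdist :: "real \<Rightarrow> real \<Rightarrow> real" where
  "tdist x y = tnorm (x - y)"

definition s_u :: "(nat \<Rightarrow> int) \<Rightarrow> real set" where
  "s_u u = {x. (\<lambda>n. tnorm (real_of_int (u n) * x)) \<longlonglongrightarrow> 0}"

text \<open>The metric rho_u defining tau_u.\<close>
definition rho_u :: "(nat \<Rightarrow> int) \<Rightarrow> real \<Rightarrow> real \<Rightarrow> real" where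
  "rho_u u x y = (SUP n. max (tdist x y) (tdist (real_of_int (u n) * x) (real_of_int (u n) * y)))"

definition torsion_T :: "real set" where
  "torsion_T = {x. \<exists>m::nat. m > 0 \<and> real m * x \<in> \<int>}"

end

theory Submission
  imports Defs
begin

lemma tnorm_min: "tnorm x \<le> \<bar>x - of_int m\<bar>"
  unfolding tnorm_def by (rule round_diff_minimal)

lemma tnorm_le_abs: "tnorm x \<le> \<bar>x\<bar>"
  using tnorm_min[of x 0] by simp

lemma tnorm_nonneg: "tnorm x \<ge> 0"
  unfolding tnorm_def by simp

lemma tnorm_shift: "tnorm (x - of_int k) = tnorm x"
proof (rule antisym)
  show "tnorm (x - of_int k) \<le> tnorm x"
    using tnorm_min[of "x - of_int k" "round x - k"] by (simp add: tnorm_def)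
  show "tnorm x \<le> tnorm (x - of_int k)"
    using tnorm_min[of x "round (x - of_int k) + k"] by (simp add: tnorm_def algebra_simps)
qed

lemma aseq_dvd:
  assumes "a_sequence u" "n \<le> m" shows "u n dvd u m"
  using assms(2)
proof (induction m)
  case 0 then show ?case by simp
next
  case (Suc m)
  show ?case
  proof (cases "n = Suc m")
    case False
    then have "u n dvd u m" using Suc by simp
    moreover have "u m dvd u (Suc m)" using assms(1) unfolding a_sequence_def by blast
    ultimately show ?thesis by (rule dvd_trans)
  qed simp
qed

lemma aseq_nonzero:
  assumes "a_sequence u" shows "u n \<noteq> 0"
proof
  assume h: "u n = 0"
  have "u n dvd u (Suc n)" using assms unfolding a_sequence_def by blast
  then have "u (Suc n) = 0" using h by simp
  moreover have "u n < u (Suc n)" using assms unfolding a_sequence_def strict_mono_def by simp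
  ultimately show False using h by simp
qed

lemma aseq_abs_le:
  assumes "a_sequence u" "n \<le> m" shows "\<bar>u n\<bar> \<le> \<bar>u m\<bar>"
proof -
  have "\<bar>u n\<bar> dvd \<bar>u m\<bar>" using aseq_dvd[OF assms] by simp
  moreover have "\<bar>u m\<bar> > 0" using aseq_nonzero[OF assms(1)] by simp
  ultimately show ?thesis by (simp add: zdvd_imp_le)
qed

theorem propositionD:
  assumes "a_sequence u"
  shows "\<forall>x \<in> s_u u. \<forall>\<epsilon>>0. \<exists>y \<in> torsion_T \<inter> s_u u. rho_u u x y < \<epsilon>"
proof (intro ballI allI impI)
  fix x :: real and \<epsilon> :: real
  assume xs: "x \<in> s_u u" and ep: "\<epsilon> > 0"
  have lim: "(\<lambda>n. tnorm (real_of_int (u n) * x)) \<longlonglongrightarrow> 0" using xs by (simp add: s_u_def)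
  from LIMSEQ_D[OF lim, of "\<epsilon>/2"] ep obtain N where
    N: "\<And>n. n \<ge> N \<Longrightarrow> tnorm (real_of_int (u n) * x) < \<epsilon>/2"
    using tnorm_nonneg by force
  define a where "a = real_of_int (u N)"
  have a0: "\<bar>a\<bar> \<ge> 1" using aseq_nonzero[OF assms, of N] unfolding a_def by linarith
  define r where "r = a * x - of_int (round (a * x))"
  have rN: "\<bar>r\<bar> = tnorm (a * x)" by (simp add: r_def tnorm_def)
  have rle: "\<bar>r\<bar> < \<epsilon>/2" using N[of N] rN a_def by simp
  define y where "y = x - r / a"
  have ay: "a * y = of_int (round (a * x))" using a0 by (simp add: y_def r_def field_simps)
  have intn: "real_of_int (u n) * y \<in> \<int>" if nN: "n \<ge> N" for n
  proof -
    obtain c where c: "u n = u N * c" using aseq_dvd[OF assms nN] by (auto elim: dvdE)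
    have "real_of_int (u n) * y = of_int c * (a * y)" by (simp add: c a_def)
    also have "\<dots> = of_int (c * round (a * x))" using ay by simp
    finally show ?thesis by simp
  qed
  have bound: "tdist (real_of_int (u n) * x) (real_of_int (u n) * y) \<le> \<epsilon>/2" for n
  proof (cases "n \<ge> N")
    case True
    then obtain k where k: "real_of_int (u n) * y = of_int k" using intn Ints_cases by metis
    show ?thesis using N[OF True] k tnorm_shift unfolding tdist_def by simp
  next
    case False
    have un: "\<bar>real_of_int (u n)\<bar> \<le> \<bar>a\<bar>" using aseq_abs_le[OF assms, of n N] False
      unfolding a_def by simp
    have "real_of_int (u n) * x - real_of_int (u n) * y = real_of_int (u n) * (r / a)"
      by (simp add: y_def algebra_simps)
    moreover have "\<bar>real_of_int (u n) * (r / a)\<bar> \<le> \<bar>r\<bar>"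
    proof -
      have "\<bar>real_of_int (u n) * (r / a)\<bar> = \<bar>real_of_int (u n)\<bar> * \<bar>r\<bar> / \<bar>a\<bar>"
        by (simp add: abs_mult)
      also have "\<dots> \<le> \<bar>a\<bar> * \<bar>r\<bar> / \<bar>a\<bar>"
        using un a0 by (intro divide_right_mono mult_right_mono) auto
      also have "\<dots> = \<bar>r\<bar>" using a0 by simp
      finally show ?thesis .
    qed
    ultimately show ?thesis unfolding tdist_def using tnorm_le_abs rle
      by (metis dual_order.trans less_imp_le)
  qed
  have bx: "tdist x y \<le> \<epsilon>/2"
  proof -
    have "\<bar>r / a\<bar> \<le> \<bar>r\<bar>" using a0
    proof -
      have "\<bar>r\<bar> * 1 \<le> \<bar>r\<bar> * \<bar>a\<bar>" using a0 by (intro mult_left_mono) auto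
      then show ?thesis using a0 by (simp add: abs_divide divide_le_eq)
    qed
    then show ?thesis unfolding tdist_def y_def using tnorm_le_abs[of "r/a"] rle by simp
  qed
  have "rho_u u x y \<le> \<epsilon>/2"
    unfolding rho_u_def by (rule cSUP_least) (use bound bx in \<open>simp_all add: max_def\<close>)
  then have "rho_u u x y < \<epsilon>" using ep by simp
  moreover have "y \<in> torsion_T"
    unfolding torsion_T_def
  proof (intro CollectI exI conjI)
    show "nat \<bar>u N\<bar> > 0" using aseq_nonzero[OF assms, of N] by simp
    have "real (nat \<bar>u N\<bar>) * y = \<bar>a\<bar> * y" by (simp add: a_def)
    also have "\<dots> = (if a \<ge> 0 then a * y else - (a * y))" by simp
    finally show "real (nat \<bar>u N\<bar>) * y \<in> \<int>" using ay by (simp split: if_splits)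
  qed
  moreover have "y \<in> s_u u"
    unfolding s_u_def
  proof (intro CollectI LIMSEQ_I exI allI impI)
    fix e :: real assume "e > 0"
    fix n assume "n \<ge> N"
    then obtain k where k: "real_of_int (u n) * y = of_int k" using intn Ints_cases by metis
    show "norm (tnorm (real_of_int (u n) * y) - 0) < e"
      using k tnorm_shift[of 0 k] \<open>e > 0\<close> by (simp add: tnorm_def)
  qed
  ultimately show "\<exists>y \<in> torsion_T \<inter> s_u u. rho_u u x y < \<epsilon>" by blast
qed

end
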